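(* Let $N\ge2$, $r\ge1$ and $c>0$. The set ${}^c\mathcal L^{N,r}_{\mathbf m,\mathbf p}$ of all matrices $\mathbf D\in\mathbb R^{m\times p}$ that can be written as $\mathbf D=\sum_{k=1}^r\mathbf D^k_1\otimes\cdots\otimes\mathbf D^k_N$ with $\mathbf D^k_n\in\mathbb R^{m_n\times p_n}$ and $\|\mathbf D^k_1\otimes\cdots\otimes\mathbf D^k_N\|_F\le c$ for every $k\in[r]$ is closed in $\mathbb R^{m\times p}$.
   Context: $m=\prod_{n=1}^N m_n$, $p=\prod_{n=1}^N p_n$; $\otimes$ denotes the Kronecker product and $\|\cdot\|_F$ the Frobenius norm. *)

theory Defs
  imports "HOL-Analysis.Analysis"
begin

text \<open>Real matrices are represented as functions on index pairs (0-based),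
  an m x p matrix being one that vanishes outside {0..<m} x {0..<p}.
  The space of such functions carries the product topology, which restricted to
  the (closed, finite-dimensional) subspace of m x p matrices is the Euclidean topology
  of R^(m x p).\<close>

type_synonym rmat = "nat \<times> nat \<Rightarrow> real"

definition mats :: "nat \<Rightarrow> nat \<Rightarrow> rmat set" where
  "mats m p = {A. \<forall>i j. (m \<le> i \<or> p \<le> j) \<longrightarrow> A (i, j) = 0}"

definition kron :: "nat \<Rightarrow> nat \<Rightarrow> rmat \<Rightarrow> rmat \<Rightarrow> rmat" where
  "kron c d A B = (\<lambda>(i, j). A (i div c, j div d) * B (i mod c, j mod d))"

fun kronN :: "(nat \<Rightarrow> nat) \<Rightarrow> (nat \<Rightarrow> nat) \<Rightarrow> (nat \<Rightarrow> rmat) \<Rightarrow> nat \<Rightarrow> rmat" where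
  "kronN m p D 0 = (\<lambda>(i, j). if i = 0 \<and> j = 0 then 1 else 0)"
| "kronN m p D (Suc n) = kron (m (Suc n)) (p (Suc n)) (kronN m p D n) (D (Suc n))"

definition frob :: "nat \<Rightarrow> nat \<Rightarrow> rmat \<Rightarrow> real" where
  "frob m p A = sqrt (\<Sum>i<m. \<Sum>j<p. (A (i, j))\<^sup>2)"

definition cL :: "real \<Rightarrow> nat \<Rightarrow> nat \<Rightarrow> (nat \<Rightarrow> nat) \<Rightarrow> (nat \<Rightarrow> nat) \<Rightarrow> rmat set" where
  "cL c N r m p =
    {D. \<exists>Dk :: nat \<Rightarrow> nat \<Rightarrow> rmat.
          (\<forall>k<r. \<forall>n\<in>{1..N}. Dk k n \<in> mats (m n) (p n)) \<and>
          (\<forall>k<r. frob (\<Prod>n=1..N. m n) (\<Prod>n=1..N. p n) (kronN m p (Dk k) N) \<le> c) \<and>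
          D = (\<lambda>ij. \<Sum>k<r. kronN m p (Dk k) N ij)}"

end

theory Submission
  imports Defs
begin

lemma kronN_cong: "(\<forall>l\<in>{1..n}. D l = D' l) \<Longrightarrow> kronN m p D n = kronN m p D' n"
  by (induction n) auto

lemma kronN_zero: "n0 \<in> {1..n} \<Longrightarrow> D n0 = (\<lambda>_. 0) \<Longrightarrow> kronN m p D n = (\<lambda>_. 0)"
proof (induction n)
  case 0 then show ?case by simp
next
  case (Suc n)
  show ?case
  proof (cases "n0 = Suc n")
    case True then show ?thesis using Suc by (auto simp: kron_def)
  next
    case False then have "kronN m p D n = (\<lambda>_. 0)" using Suc by auto
    then show ?thesis by (auto simp: kron_def)
  qed
qed

lemma kron_mats:
  assumes A: "A \<in> mats M P" and B: "B \<in> mats c d"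
  shows "kron c d A B \<in> mats (M * c) (P * d)"
  unfolding mats_def kron_def
proof (intro CollectI allI impI)
  fix i j :: nat assume h: "M * c \<le> i \<or> P * d \<le> j"
  show "(case (i, j) of (i, j) \<Rightarrow> A (i div c, j div d) * B (i mod c, j mod d)) = 0"
  proof (cases "c = 0 \<or> d = 0")
    case True then have "B (i mod c, j mod d) = 0" using B by (auto simp: mats_def)
    then show ?thesis by simp
  next
    case False
    then have "M \<le> i div c \<or> P \<le> j div d" using h
      by (metis div_le_mono mult.commute nonzero_mult_div_cancel_left)
    then have "A (i div c, j div d) = 0" using A by (auto simp: mats_def)
    then show ?thesis by simp
  qed
qed

lemma kronN_mats:
  "\<forall>l\<in>{1..n}. D l \<in> mats (m l) (p l) \<Longrightarrow> kronN m p D n \<in> mats (\<Prod>l=1..n. m l) (\<Prod>l=1..n. p l)"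
proof (induction n)
  case 0 then show ?case by (auto simp: mats_def)
next
  case (Suc n)
  then have "kronN m p D n \<in> mats (\<Prod>l=1..n. m l) (\<Prod>l=1..n. p l)" by auto
  moreover have "D (Suc n) \<in> mats (m (Suc n)) (p (Suc n))" using Suc by auto
  ultimately have "kronN m p D (Suc n) \<in> mats ((\<Prod>l=1..n. m l) * m (Suc n)) ((\<Prod>l=1..n. p l) * p (Suc n))"
    by (simp add: kron_mats)
  moreover have "(\<Prod>l=1..Suc n. m l) = (\<Prod>l=1..n. m l) * m (Suc n)"
    "(\<Prod>l=1..Suc n. p l) = (\<Prod>l=1..n. p l) * p (Suc n)"
    by (simp_all add: prod.nat_ivl_Suc' mult.commute)
  ultimately show ?case by simp
qed

lemma kronN_scale:
  "kronN m p (\<lambda>l ij. a l * D l ij) n = (\<lambda>ij. (\<Prod>l=1..n. a l) * kronN m p D n ij)"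
proof (induction n)
  case 0 then show ?case by auto
next
  case (Suc n)
  show ?case
    by (simp add: Suc kron_def prod.nat_ivl_Suc' split_def fun_eq_iff algebra_simps)
qed

lemma kronN_entry:
  assumes "\<forall>l\<in>{1..n}. \<exists>a<m l. \<exists>b<p l. \<bar>D l (a, b)\<bar> = mu l"
  shows "\<exists>i j. \<bar>kronN m p D n (i, j)\<bar> = (\<Prod>l=1..n. mu l)"
  using assms
proof (induction n)
  case 0 then show ?case by auto
next
  case (Suc n)
  then obtain i j where ij: "\<bar>kronN m p D n (i, j)\<bar> = (\<Prod>l=1..n. mu l)" by auto
  obtain a b where ab: "a < m (Suc n)" "b < p (Suc n)" "\<bar>D (Suc n) (a, b)\<bar> = mu (Suc n)"
    using Suc.prems by force
  have "(i * m (Suc n) + a) div m (Suc n) = i" "(i * m (Suc n) + a) mod m (Suc n) = a"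
    "(j * p (Suc n) + b) div p (Suc n) = j" "(j * p (Suc n) + b) mod p (Suc n) = b"
    using ab by auto
  then have "\<bar>kronN m p D (Suc n) (i * m (Suc n) + a, j * p (Suc n) + b)\<bar> = (\<Prod>l=1..Suc n. mu l)"
    using ij ab by (simp add: kron_def abs_mult prod.nat_ivl_Suc' mult.commute)
  then show ?case by blast
qed

lemma entry_le_frob:
  assumes "i < M" "j < P"
  shows "\<bar>A (i, j)\<bar> \<le> frob M P A"
proof -
  have "(A (i, j))\<^sup>2 \<le> (\<Sum>j'<P. (A (i, j'))\<^sup>2)"
    using assms by (intro member_le_sum) auto
  also have "\<dots> \<le> (\<Sum>i'<M. \<Sum>j'<P. (A (i', j'))\<^sup>2)"
    using assms by (intro member_le_sum[where f = "\<lambda>i'. \<Sum>j'<P. (A (i', j'))\<^sup>2"]) (auto intro: sum_nonneg)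
  finally show ?thesis unfolding frob_def using real_sqrt_abs real_sqrt_le_mono by metis
qed


lemma normalize:
  assumes N: "N \<ge> 1" and c: "c \<ge> 0"
    and D: "\<forall>n\<in>{1..N}. D n \<in> mats (m n) (p n)"
    and F: "frob (\<Prod>n=1..N. m n) (\<Prod>n=1..N. p n) (kronN m p D N) \<le> c"
  shows "\<exists>D'. (\<forall>n\<in>{1..N}. D' n \<in> mats (m n) (p n) \<and> (\<forall>ij. \<bar>D' n ij\<bar> \<le> root N c))
           \<and> kronN m p D' N = kronN m p D N"
proof (cases "\<exists>n\<in>{1..N}. D n = (\<lambda>_. 0)")
  case True
  then obtain n0 where n0: "n0 \<in> {1..N}" "D n0 = (\<lambda>_. 0)" by blast
  have "kronN m p D N = (\<lambda>_. 0)" using kronN_zero[of n0 N D m p] n0 by blast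
  moreover have "kronN m p (\<lambda>_ _. 0) N = (\<lambda>_. 0)" using kronN_zero[of 1 N] N by auto
  ultimately show ?thesis using c by (intro exI[of _ "\<lambda>_ _. 0"]) (auto simp: mats_def)
next
  case False
  define mu where "mu n = Max ((\<lambda>(i,j). \<bar>D n (i,j)\<bar>) ` ({..<m n} \<times> {..<p n}))" for n
  have mu: "(\<forall>ij. \<bar>D n ij\<bar> \<le> mu n) \<and> (\<exists>a<m n. \<exists>b<p n. \<bar>D n (a, b)\<bar> = mu n) \<and> mu n > 0"
    if n: "n \<in> {1..N}" for n
  proof -
    obtain ij0 where ij0: "D n ij0 \<noteq> 0" using False n by (meson ext)
    obtain i0 j0 where ij0': "ij0 = (i0, j0)" by (cases ij0)
    have "D n \<in> mats (m n) (p n)" using D n by blast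
    then have "\<forall>i j. (m n \<le> i \<or> p n \<le> j) \<longrightarrow> D n (i, j) = 0" by (simp add: mats_def)
    then have "\<not> (m n \<le> i0 \<or> p n \<le> j0)" using ij0 ij0' by blast
    then have in0: "i0 < m n" "j0 < p n" by simp_all
    let ?S = "(\<lambda>(i,j). \<bar>D n (i,j)\<bar>) ` ({..<m n} \<times> {..<p n})"
    have fin: "finite ?S" by auto
    have ne: "?S \<noteq> {}" using in0 by auto
    have ge: "\<bar>D n (i0, j0)\<bar> \<le> mu n" unfolding mu_def using in0 by (intro Max_ge[OF fin]) auto
    have all: "\<bar>D n ij\<bar> \<le> mu n" for ij
    proof -
      obtain i j where ij: "ij = (i, j)" by (cases ij)
      show ?thesis
      proof (cases "i < m n \<and> j < p n")
        case True then show ?thesis unfolding mu_def ij by (intro Max_ge[OF fin]) auto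
      next
        case False then have "D n ij = 0" using D n ij unfolding mats_def by auto
        then show ?thesis using ge by simp
      qed
    qed
    have "mu n \<in> ?S" unfolding mu_def using Max_in[OF fin ne] .
    then have ex: "\<exists>a<m n. \<exists>b<p n. \<bar>D n (a, b)\<bar> = mu n" by force
    have "mu n > 0" using ge ij0 ij0' by simp
    then show ?thesis using all ex by blast
  qed
  define PM where "PM = (\<Prod>l=1..N. mu l)"
  have PMpos: "PM > 0" unfolding PM_def using mu by (intro prod_pos) auto
  obtain i j where ij: "\<bar>kronN m p D N (i, j)\<bar> = PM"
    using kronN_entry[of N m p D mu] mu unfolding PM_def by blast
  have km: "kronN m p D N \<in> mats (\<Prod>n=1..N. m n) (\<Prod>n=1..N. p n)" using kronN_mats D by blast
  have "\<forall>i j. ((\<Prod>n=1..N. m n) \<le> i \<or> (\<Prod>n=1..N. p n) \<le> j) \<longrightarrow> kronN m p D N (i, j) = 0"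
    using km by (simp add: mats_def)
  moreover have "kronN m p D N (i, j) \<noteq> 0" using ij PMpos by auto
  ultimately have "\<not> ((\<Prod>n=1..N. m n) \<le> i \<or> (\<Prod>n=1..N. p n) \<le> j)" by blast
  then have "i < (\<Prod>n=1..N. m n) \<and> j < (\<Prod>n=1..N. p n)" by simp
  then have "PM \<le> c" using entry_le_frob[of i "\<Prod>n=1..N. m n" j "\<Prod>n=1..N. p n" "kronN m p D N"] F ij by linarith
  define t where "t = root N PM"
  have tpos: "t > 0" unfolding t_def using PMpos N by simp
  have tc: "t \<le> root N c" unfolding t_def using \<open>PM \<le> c\<close> N by simp
  define a where "a n = t / mu n" for n
  define D' where "D' = (\<lambda>l ij. a l * D l ij)"
  have "(\<Prod>l=1..N. a l) = (\<Prod>l=1..N. t) / PM" unfolding a_def PM_def by (simp add: prod_dividef)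
  also have "\<dots> = t ^ N / PM" by simp
  also have "t ^ N = PM" unfolding t_def using N PMpos by (simp add: real_root_pow_pos2)
  finally have pa: "(\<Prod>l=1..N. a l) = 1" using PMpos by simp
  have "kronN m p D' N = kronN m p D N" unfolding D'_def kronN_scale pa by simp
  moreover have "D' n \<in> mats (m n) (p n) \<and> (\<forall>ij. \<bar>D' n ij\<bar> \<le> root N c)" if n: "n \<in> {1..N}" for n
  proof -
    have "D' n \<in> mats (m n) (p n)" using D n unfolding D'_def mats_def by auto
    moreover have "\<bar>D' n ij\<bar> \<le> root N c" for ij
    proof -
      have m0: "mu n > 0" "\<bar>D n ij\<bar> \<le> mu n" using mu[OF n] by blast+
      have "\<bar>D' n ij\<bar> = t / mu n * \<bar>D n ij\<bar>" unfolding D'_def a_def using tpos m0 by (simp add: abs_mult)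
      also have "\<dots> \<le> t / mu n * mu n" using m0 tpos by (intro mult_left_mono) auto
      also have "\<dots> = t" using m0 by simp
      finally show ?thesis using tc by simp
    qed
    ultimately show ?thesis by blast
  qed
  ultimately show ?thesis by blast
qed


definition Dk_of :: "(nat \<times> nat \<times> nat \<times> nat \<Rightarrow> real) \<Rightarrow> nat \<Rightarrow> nat \<Rightarrow> rmat" where
  "Dk_of F = (\<lambda>k n (i, j). F (k, n, i, j))"

lemma kronN_cont: "continuous_on UNIV (\<lambda>F. kronN m p (Dk_of F k) n ij)"
proof (induction n arbitrary: ij)
  case 0 then show ?case by simp
next
  case (Suc n)
  obtain i j where ij: "ij = (i, j)" by (cases ij)
  have e: "(\<lambda>F. kronN m p (Dk_of F k) (Suc n) ij) = (\<lambda>F. kronN m p (Dk_of F k) n (i div m (Suc n), j div p (Suc n))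
        * Dk_of F k (Suc n) (i mod m (Suc n), j mod p (Suc n)))"
    by (simp add: ij kron_def)
  have d: "(\<lambda>F. Dk_of F k (Suc n) (i mod m (Suc n), j mod p (Suc n))) = (\<lambda>F. F (k, Suc n, i mod m (Suc n), j mod p (Suc n)))"
    by (simp add: Dk_of_def)
  show ?case unfolding e
    by (intro continuous_on_mult Suc) (simp only: d continuous_on_product_coordinates)
qed

lemma compact_box:
  fixes S :: "nat \<times> nat \<times> nat \<times> nat \<Rightarrow> real set"
  assumes "\<And>x. compact (S x)"
  shows "compact (PiE UNIV S)"
proof -
  have "compactin (product_topology (\<lambda>_. euclidean) UNIV) (PiE UNIV S)"
    using assms by (simp add: compactin_PiE)
  then show ?thesis by (simp add: euclidean_product_topology)
qed

theorem corollary1: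
  fixes N r :: nat and c :: real and m p :: "nat \<Rightarrow> nat"
  assumes "N \<ge> 2" and "r \<ge> 1" and "c > 0"
  shows "cL c N r m p \<subseteq> mats (\<Prod>n=1..N. m n) (\<Prod>n=1..N. p n) \<and> closed (cL c N r m p)"
proof
  let ?M = "\<Prod>n=1..N. m n" and ?P = "\<Prod>n=1..N. p n"
  show "cL c N r m p \<subseteq> mats ?M ?P"
  proof
    fix D assume "D \<in> cL c N r m p"
    then obtain Dk where Dk: "\<forall>k<r. \<forall>n\<in>{1..N}. Dk k n \<in> mats (m n) (p n)"
      and De: "D = (\<lambda>ij. \<Sum>k<r. kronN m p (Dk k) N ij)" unfolding cL_def by blast
    have "\<forall>k<r. kronN m p (Dk k) N \<in> mats ?M ?P" using Dk kronN_mats by blast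
    then show "D \<in> mats ?M ?P" unfolding De mats_def by auto
  qed
  define B where "B = root N c"
  define inr where "inr = (\<lambda>(k, n, i, j). k < r \<and> n \<in> {1..N} \<and> i < m n \<and> j < p n)"
  define K where "K = PiE UNIV (\<lambda>x. if inr x then {-B..B} else {0::real})"
  define C where "C = (\<Inter>k<r. {F. frob ?M ?P (kronN m p (Dk_of F k) N) \<le> c})"
  define Phi where "Phi = (\<lambda>F ij. \<Sum>k<r. kronN m p (Dk_of F k) N ij)"
  have Kc: "compact K" unfolding K_def by (intro compact_box) auto
  have Cc: "closed C" unfolding C_def
  proof (intro closed_INT ballI closed_Collect_le continuous_on_const)
    fix k
    show "continuous_on UNIV (\<lambda>F. frob ?M ?P (kronN m p (Dk_of F k) N))"
      unfolding frob_def by (intro continuous_intros kronN_cont)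
  qed
  have Phic: "continuous_on UNIV Phi" unfolding Phi_def
    by (intro continuous_on_coordinatewise_then_product continuous_on_sum kronN_cont)
  have eq: "cL c N r m p = Phi ` (K \<inter> C)"
  proof
    show "Phi ` (K \<inter> C) \<subseteq> cL c N r m p"
    proof
      fix D assume "D \<in> Phi ` (K \<inter> C)"
      then obtain F where F: "F \<in> K" "F \<in> C" and De: "D = Phi F" by blast
      have "Dk_of F k n \<in> mats (m n) (p n)" if "k < r" "n \<in> {1..N}" for k n
        unfolding mats_def
      proof (intro CollectI allI impI)
        fix i j assume "m n \<le> i \<or> p n \<le> j"
        then have "\<not> inr (k, n, i, j)" unfolding inr_def by auto
        then have "F (k, n, i, j) \<in> {0}" using F(1) unfolding K_def PiE_def Pi_def
          by (metis (no_types, lifting) UNIV_I mem_Collect_eq IntE)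
        then show "Dk_of F k n (i, j) = 0" by (simp add: Dk_of_def)
      qed
      moreover have "\<forall>k<r. frob ?M ?P (kronN m p (Dk_of F k) N) \<le> c" using F(2) unfolding C_def by blast
      ultimately show "D \<in> cL c N r m p" unfolding cL_def De Phi_def by blast
    qed
  next
    show "cL c N r m p \<subseteq> Phi ` (K \<inter> C)"
    proof
      fix D assume "D \<in> cL c N r m p"
      then obtain Dk where Dk: "\<forall>k<r. \<forall>n\<in>{1..N}. Dk k n \<in> mats (m n) (p n)"
        and Df: "\<forall>k<r. frob ?M ?P (kronN m p (Dk k) N) \<le> c"
        and De: "D = (\<lambda>ij. \<Sum>k<r. kronN m p (Dk k) N ij)" unfolding cL_def by blast
      have "\<forall>k. \<exists>E. k < r \<longrightarrow> (\<forall>n\<in>{1..N}. E n \<in> mats (m n) (p n) \<and> (\<forall>ij. \<bar>E n ij\<bar> \<le> B))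
           \<and> kronN m p E N = kronN m p (Dk k) N"
        using normalize[of N c "Dk _" m p] Dk Df assms unfolding B_def by auto
      then obtain E where E: "\<And>k. k < r \<Longrightarrow> (\<forall>n\<in>{1..N}. E k n \<in> mats (m n) (p n) \<and> (\<forall>ij. \<bar>E k n ij\<bar> \<le> B))
           \<and> kronN m p (E k) N = kronN m p (Dk k) N" by metis
      define F where "F = (\<lambda>(k, n, i, j). if k < r \<and> n \<in> {1..N} then E k n (i, j) else 0)"
      have kF: "kronN m p (Dk_of F k) N = kronN m p (Dk k) N" if "k < r" for k
      proof -
        have "kronN m p (Dk_of F k) N = kronN m p (E k) N"
          by (intro kronN_cong) (auto simp: Dk_of_def F_def that fun_eq_iff)
        then show ?thesis using E[OF that] by simp
      qed
      have "F \<in> K" unfolding K_def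
      proof (intro PiE_I)
        fix x :: "nat \<times> nat \<times> nat \<times> nat"
        obtain k n i j where x: "x = (k, n, i, j)" by (cases x) auto
        show "F x \<in> (if inr x then {-B..B} else {0})"
        proof (cases "inr x")
          case True
          then have "k < r" "n \<in> {1..N}" unfolding x inr_def by auto
          then have "\<bar>E k n (i, j)\<bar> \<le> B" using E by blast
          then show ?thesis using True \<open>k < r\<close> \<open>n \<in> {1..N}\<close> unfolding x F_def by (simp add: abs_le_iff)
        next
          case False
          show ?thesis
          proof (cases "k < r \<and> n \<in> {1..N}")
            case True
            then have "E k n \<in> mats (m n) (p n)" using E by blast
            moreover have "m n \<le> i \<or> p n \<le> j" using False True unfolding x inr_def by auto
            ultimately have "E k n (i, j) = 0" unfolding mats_def by blast
            then show ?thesis using False True unfolding x F_def by simp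
          next
            case False2: False
            then show ?thesis using False unfolding x F_def by auto
          qed
        qed
      qed auto
      moreover have "F \<in> C" unfolding C_def using kF Df by auto
      moreover have "Phi F = D" unfolding Phi_def De using kF by (intro ext sum.cong) auto
      ultimately show "D \<in> Phi ` (K \<inter> C)" by blast
    qed
  qed
  have "compact (Phi ` (K \<inter> C))"
    by (intro compact_continuous_image continuous_on_subset[OF Phic] compact_Int_closed Kc Cc) auto
  then show "closed (cL c N r m p)" unfolding eq by (rule compact_imp_closed)
qed

end
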